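(* Consider the multilayer probit network model and the pairwise log-likelihood described in the context, with true parameter $\boldsymbol{\omega}^*=(\boldsymbol{\mu}^*,\boldsymbol{\Sigma}^*,\boldsymbol{Z}^* )\in\boldsymbol{\Omega}$ and arbitrary true within-layer edge correlations $r^{(b)}_{i_1j_1,i_2j_2}$. For $\boldsymbol{\omega}=(\boldsymbol{\Theta},\boldsymbol{Z})$ with $\boldsymbol{\Theta}=(\boldsymbol{\mu},\boldsymbol{\Sigma})$, let $$\boldsymbol{e}(\boldsymbol{\omega}^*,\boldsymbol{\omega})=\frac{1}{N^2M^2}\sum_{k,l\in[K]}\mathbb{E}\big(\mathcal{L}_{kl}(\boldsymbol{\Theta}^*,\boldsymbol{Z}^* )-\mathcal{L}_{kl}(\boldsymbol{\Theta},\boldsymbol{Z})\big),$$ where the expectation is taken under the true model. Then $\boldsymbol{e}(\boldsymbol{\omega}^*,\boldsymbol{\omega})\ge 0$ for every $\boldsymbol{\omega}\in\boldsymbol{\Omega}$.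
   Context: Multilayer probit network model: there are $N$ nodes, $M$ layers and $K$ communities. Each node $i$ has a community label $e_i\in[K]$, encoded by $\boldsymbol{Z}\in\{0,1\}^{N\times K}$ with $Z_{ik}=1$ iff $e_i=k$. Layer $b$ has a symmetric adjacency matrix $\boldsymbol{A}^{(b)}\in\{0,1\}^{N\times N}$. For $i<j$ and $b\in[M]$, $A^{(b)}_{ij}=\mathbb{I}\{\mu^{(b)}_{e_ie_j}+\varepsilon^{(b)}_{ij}>0\}$, where $\boldsymbol{\varepsilon}_{ij}=(\varepsilon^{(1)}_{ij},\dots,\varepsilon^{(M)}_{ij})^\top\sim N(0,\boldsymbol{\Sigma}_{e_ie_j})$, $\boldsymbol{\Sigma}_{kl}=(\Sigma^{(bd)}_{kl})_{b,d\in[M]}$ is positive definite with all diagonal entries equal to $1$, the vectors $\boldsymbol{\varepsilon}_{ij}$ are jointly Gaussian, and $\operatorname{corr}(\boldsymbol{\varepsilon}_{i_1j_1},\boldsymbol{\varepsilon}_{i_2j_2})=\operatorname{diag}(r^{(1)}_{i_1j_1,i_2j_2},\dots,r^{(M)}_{i_1j_1,i_2j_2})$ with $r^{(b)}_{i_1j_1,i_2j_2}\in[-1,1]$ (within-layer edge dependence). Write $\boldsymbol{\mu}=(\mu^{(b)}_{kl})$, $\boldsymbol{\Sigma}=(\Sigma^{(bd)}_{kl})$, $\boldsymbol{\Theta}=(\boldsymbol{\mu},\boldsymbol{\Sigma})$, $\boldsymbol{\Theta}^{(bd)}_{kl}=(\mu^{(b)}_{kl},\mu^{(d)}_{kl},\Sigma^{(bd)}_{kl})$.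 Pairwise likelihood: let $\Phi$ be the standard normal CDF and $\Phi_2(x,y,\sigma)$ the CDF at $(x,y)$ of the bivariate centered normal with unit variances and correlation $\sigma$. Define $\alpha_1=\Phi_2(\mu^{(b)}_{kl},\mu^{(d)}_{kl},\Sigma^{(bd)}_{kl})$, $\alpha_2=\Phi(\mu^{(b)}_{kl})-\alpha_1$, $\alpha_3=\Phi(\mu^{(d)}_{kl})-\alpha_1$, $\alpha_4=1-\Phi(\mu^{(b)}_{kl})-\Phi(\mu^{(d)}_{kl})+\alpha_1$ (all as functions of $\boldsymbol{\Theta}^{(bd)}_{kl}$). Then $\mathcal{L}_{kl}(\boldsymbol{\Theta},\boldsymbol{Z})=\sum_{i<j}\sum_{b<d}Z_{ik}Z_{jl}\{A^{(b)}_{ij}A^{(d)}_{ij}\log\alpha_1+A^{(b)}_{ij}(1-A^{(d)}_{ij})\log\alpha_2+(1-A^{(b)}_{ij})A^{(d)}_{ij}\log\alpha_3+(1-A^{(b)}_{ij})(1-A^{(d)}_{ij})\log\alpha_4\}$ and $\mathcal{L}=\sum_{k,l}\mathcal{L}_{kl}$. Parameter space: for each $k,l$, $T_{kl}\subseteq[M]\times[M]$ is a known set with $|T_{kl}|=s^*_{kl}+M$, and $\mathcal{S}_{kl}$ is either $\{X\in\mathbb{R}^{M\times M}: X\succ0,\ \operatorname{diag}(X)=\mathbf{1}_M,\ \operatorname{Supp}(X)=T_{kl}\}$ or $\{X\succ 0:\operatorname{diag}(X)=\mathbf{1}_M,\ \operatorname{Supp}(X^{-1})=T_{kl}\}$.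 With constants $c_l<1<c_u$, a sparsity level $\rho_{N,M}\in(0,1)$ and $D_{N,M}<1$, $\boldsymbol{\Omega}=\{\boldsymbol{\omega}=(\boldsymbol{\mu},\boldsymbol{\Sigma},\boldsymbol{Z}): \boldsymbol{Z}\in\{0,1\}^{N\times K},\ \boldsymbol{Z}\mathbf{1}_K=\mathbf{1}_N,\ c_l\rho_{N,M}\le\Phi(\mu^{(b)}_{kl})\le c_u\rho_{N,M},\ \boldsymbol{\Sigma}_{kl}\in\mathcal{S}_{kl},\ \sup_{k,l}\|\operatorname{ndiag}(\boldsymbol{\Sigma}_{kl})\|_{\max}\le D_{N,M}\}$, where $\operatorname{ndiag}(Y)=Y-\operatorname{diag}(Y)$ and $\|\cdot\|_{\max}$ is the maximal absolute entry. *)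

theory Defs
  imports "HOL-Probability.Probability"
begin

text \<open>Nodes are 0..N-1, layers 0..M-1, communities 0..K-1.
  Parameters: mu b k l = mu^(b)_kl ; Sig b d k l = Sigma^(bd)_kl ; Z i k = Z_ik.\<close>

definition Phi :: "real \<Rightarrow> real" where
  "Phi x = measure (density lborel (\<lambda>t. ennreal (std_normal_density t))) {..x}"

definition binormal_density :: "real \<Rightarrow> real \<times> real \<Rightarrow> real" where
  "binormal_density s p =
     exp (- ((fst p)\<^sup>2 - 2 * s * fst p * snd p + (snd p)\<^sup>2) / (2 * (1 - s\<^sup>2)))
     / (2 * pi * sqrt (1 - s\<^sup>2))"

definition Phi2 :: "real \<Rightarrow> real \<Rightarrow> real \<Rightarrow> real" where
  "Phi2 x y s = measure (density lborel (\<lambda>p. ennreal (binormal_density s p))) ({..x} \<times> {..y})"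

definition alpha1 :: "real \<Rightarrow> real \<Rightarrow> real \<Rightarrow> real" where
  "alpha1 mb md s = Phi2 mb md s"
definition alpha2 :: "real \<Rightarrow> real \<Rightarrow> real \<Rightarrow> real" where
  "alpha2 mb md s = Phi mb - Phi2 mb md s"
definition alpha3 :: "real \<Rightarrow> real \<Rightarrow> real \<Rightarrow> real" where
  "alpha3 mb md s = Phi md - Phi2 mb md s"
definition alpha4 :: "real \<Rightarrow> real \<Rightarrow> real \<Rightarrow> real" where
  "alpha4 mb md s = 1 - Phi mb - Phi md + Phi2 mb md s"

definition Lkl :: "nat \<Rightarrow> nat \<Rightarrow> (nat \<Rightarrow> nat \<Rightarrow> nat \<Rightarrow> real) \<Rightarrow>
    (nat \<Rightarrow> nat \<Rightarrow> nat \<Rightarrow> nat \<Rightarrow> real) \<Rightarrow> (nat \<Rightarrow> nat \<Rightarrow> real) \<Rightarrow>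
    (nat \<Rightarrow> nat \<Rightarrow> nat \<Rightarrow> real) \<Rightarrow> nat \<Rightarrow> nat \<Rightarrow> real" where
  "Lkl N M mu Sig Z A k l =
    (\<Sum>i<N. \<Sum>j\<in>{i<..<N}. \<Sum>b<M. \<Sum>d\<in>{b<..<M}.
      Z i k * Z j l *
       (A b i j * A d i j * ln (alpha1 (mu b k l) (mu d k l) (Sig b d k l))
        + A b i j * (1 - A d i j) * ln (alpha2 (mu b k l) (mu d k l) (Sig b d k l))
        + (1 - A b i j) * A d i j * ln (alpha3 (mu b k l) (mu d k l) (Sig b d k l))
        + (1 - A b i j) * (1 - A d i j) * ln (alpha4 (mu b k l) (mu d k l) (Sig b d k l))))"

definition comm :: "nat \<Rightarrow> (nat \<Rightarrow> nat \<Rightarrow> real) \<Rightarrow> nat \<Rightarrow> nat" where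
  "comm K Z i = (THE k. k < K \<and> Z i k = 1)"

definition Adj :: "nat \<Rightarrow> (nat \<Rightarrow> nat \<Rightarrow> nat \<Rightarrow> real) \<Rightarrow> (nat \<Rightarrow> nat \<Rightarrow> real) \<Rightarrow>
    (nat \<Rightarrow> nat \<Rightarrow> nat \<Rightarrow> 'w \<Rightarrow> real) \<Rightarrow> 'w \<Rightarrow> nat \<Rightarrow> nat \<Rightarrow> nat \<Rightarrow> real" where
  "Adj K mu Z eps w b i j =
     (if i < j then (if mu b (comm K Z i) (comm K Z j) + eps i j b w > 0 then 1 else 0)
      else if j < i then (if mu b (comm K Z j) (comm K Z i) + eps j i b w > 0 then 1 else 0)
      else 0)"

definition supp_mat :: "nat \<Rightarrow> (nat \<Rightarrow> nat \<Rightarrow> real) \<Rightarrow> (nat \<times> nat) set" where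
  "supp_mat M X = {(b, d). b < M \<and> d < M \<and> X b d \<noteq> 0}"

definition pos_def :: "nat \<Rightarrow> (nat \<Rightarrow> nat \<Rightarrow> real) \<Rightarrow> bool" where
  "pos_def M X \<longleftrightarrow> (\<forall>b<M. \<forall>d<M. X b d = X d b) \<and>
     (\<forall>x::nat \<Rightarrow> real. (\<exists>b<M. x b \<noteq> 0) \<longrightarrow> (\<Sum>b<M. \<Sum>d<M. x b * X b d * x d) > 0)"

definition is_inverse :: "nat \<Rightarrow> (nat \<Rightarrow> nat \<Rightarrow> real) \<Rightarrow> (nat \<Rightarrow> nat \<Rightarrow> real) \<Rightarrow> bool" where
  "is_inverse M X Y \<longleftrightarrow> (\<forall>b<M. \<forall>d<M. (\<Sum>c<M. X b c * Y c d) = (if b = d then 1 else 0))"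

definition in_S :: "nat \<Rightarrow> (nat \<times> nat) set \<Rightarrow> bool \<Rightarrow> (nat \<Rightarrow> nat \<Rightarrow> real) \<Rightarrow> bool" where
  "in_S M T inv_supp X \<longleftrightarrow> pos_def M X \<and> (\<forall>b<M. X b b = 1) \<and>
     (if inv_supp then (\<exists>Y. is_inverse M X Y \<and> supp_mat M Y = T) else supp_mat M X = T)"

definition Omega :: "nat \<Rightarrow> nat \<Rightarrow> nat \<Rightarrow> real \<Rightarrow> real \<Rightarrow> real \<Rightarrow> real \<Rightarrow>
    (nat \<Rightarrow> nat \<Rightarrow> (nat \<times> nat) set) \<Rightarrow> (nat \<Rightarrow> nat \<Rightarrow> bool) \<Rightarrow>
    (nat \<Rightarrow> nat \<Rightarrow> nat \<Rightarrow> real) \<Rightarrow> (nat \<Rightarrow> nat \<Rightarrow> nat \<Rightarrow> nat \<Rightarrow> real) \<Rightarrow>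
    (nat \<Rightarrow> nat \<Rightarrow> real) \<Rightarrow> bool" where
  "Omega N M K cl cu rho D T inv_supp mu Sig Z \<longleftrightarrow>
     (\<forall>i<N. \<forall>k<K. Z i k = 0 \<or> Z i k = 1) \<and>
     (\<forall>i<N. (\<Sum>k<K. Z i k) = 1) \<and>
     (\<forall>b<M. \<forall>k<K. \<forall>l<K. cl * rho \<le> Phi (mu b k l) \<and> Phi (mu b k l) \<le> cu * rho) \<and>
     (\<forall>k<K. \<forall>l<K. in_S M (T k l) (inv_supp k l) (\<lambda>b d. Sig b d k l)) \<and>
     (\<forall>k<K. \<forall>l<K. \<forall>b<M. \<forall>d<M. b \<noteq> d \<longrightarrow> \<bar>Sig b d k l\<bar> \<le> D)"

definition excess :: "'w measure \<Rightarrow> nat \<Rightarrow> nat \<Rightarrow> nat \<Rightarrow>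
    (nat \<Rightarrow> nat \<Rightarrow> nat \<Rightarrow> 'w \<Rightarrow> real) \<Rightarrow>
    (nat \<Rightarrow> nat \<Rightarrow> nat \<Rightarrow> real) \<Rightarrow> (nat \<Rightarrow> nat \<Rightarrow> nat \<Rightarrow> nat \<Rightarrow> real) \<Rightarrow> (nat \<Rightarrow> nat \<Rightarrow> real) \<Rightarrow>
    (nat \<Rightarrow> nat \<Rightarrow> nat \<Rightarrow> real) \<Rightarrow> (nat \<Rightarrow> nat \<Rightarrow> nat \<Rightarrow> nat \<Rightarrow> real) \<Rightarrow> (nat \<Rightarrow> nat \<Rightarrow> real) \<Rightarrow> real" where
  "excess P N M K eps mu0 Sig0 Z0 mu Sig Z =
     1 / (real N ^ 2 * real M ^ 2) *
     (\<Sum>k<K. \<Sum>l<K. integral\<^sup>L P (\<lambda>w.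
        Lkl N M mu0 Sig0 Z0 (Adj K mu0 Z0 eps w) k l - Lkl N M mu Sig Z (Adj K mu0 Z0 eps w) k l))"

end

theory Submission imports Defs begin

definition Qm :: "real \<Rightarrow> (real \<times> real) measure" where
  "Qm s = density lborel (\<lambda>p. ennreal (binormal_density s p))"

lemma binormal_factor:
  assumes "\<bar>s\<bar> < 1"
  shows "binormal_density s (x, y) = std_normal_density x * normal_density (s * x) (sqrt (1 - s\<^sup>2)) y"
proof -
  have s2: "0 < 1 - s\<^sup>2" using assms by (simp add: abs_square_less_1)
  have e: "exp (- (x\<^sup>2 - 2 * s * x * y + y\<^sup>2) / (2 * (1 - s\<^sup>2))) = exp (- x\<^sup>2 / 2) * exp (-(y - s*x)\<^sup>2 / (2 * (1 - s\<^sup>2)))"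
  proof -
    have h: "- (x\<^sup>2 - 2 * s * x * y + y\<^sup>2) / (2 * (1 - s\<^sup>2)) = - x\<^sup>2 / 2 + -(y - s*x)\<^sup>2 / (2 * (1 - s\<^sup>2))"
      using s2 by (simp add: field_simps power2_eq_square)
    then show ?thesis by (subst h) (rule exp_add)
  qed
  have q: "sqrt (2 * pi * (sqrt (1 - s\<^sup>2))\<^sup>2) = sqrt (2*pi) * sqrt (1 - s\<^sup>2)"
    using s2 by (simp add: real_sqrt_mult)
  show ?thesis
    unfolding binormal_density_def normal_density_def fst_conv snd_conv e q
    using s2 by (simp add: field_simps real_sqrt_mult)
qed

lemma binormal_nonneg: "\<bar>s\<bar> < 1 \<Longrightarrow> 0 \<le> binormal_density s p"
  using binormal_factor[of s "fst p" "snd p"] by simp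

lemma binormal_pos: "\<bar>s\<bar> < 1 \<Longrightarrow> 0 < binormal_density s p"
  using binormal_factor[of s "fst p" "snd p"] normal_density_pos[of "sqrt (1 - s\<^sup>2)"] normal_density_pos[of 1]
  by (simp add: abs_square_less_1)

lemma binormal_swap: "binormal_density s (x, y) = binormal_density s (y, x)"
  unfolding binormal_density_def by (simp add: algebra_simps)

lemma binormal_meas: "\<bar>s\<bar> < 1 \<Longrightarrow> binormal_density s \<in> borel_measurable borel"
  unfolding binormal_density_def[abs_def]
  by (intro borel_measurable_continuous_onI continuous_intros) (auto simp: power2_eq_1_iff)

lemma nn_normal: "0 < sg \<Longrightarrow> (\<integral>\<^sup>+ y. ennreal (normal_density m sg y) \<partial>lborel) = 1"
  by (subst nn_integral_eq_integral) auto

lemma sets_Qm[simp]: "sets (Qm s) = sets borel"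
  by (simp add: Qm_def)

lemma times_borel[measurable]: "A \<in> sets borel \<Longrightarrow> B \<in> sets borel \<Longrightarrow> (A \<times> B :: (real\<times>real) set) \<in> sets borel"
  by (metis borel_prod pair_measureI)

lemma marg1:
  assumes s: "\<bar>s\<bar> < 1" and A: "A \<in> sets borel"
  shows "emeasure (Qm s) (A \<times> UNIV) = emeasure (density lborel std_normal_density) A"
proof -
  have sg: "0 < sqrt (1 - s\<^sup>2)" using s by (simp add: abs_square_less_1)
  note bm = binormal_meas[OF s]
  have m: "(\<lambda>p. ennreal (binormal_density s p) * indicator (A \<times> UNIV) p) \<in> borel_measurable (lborel \<Otimes>\<^sub>M lborel)"
    unfolding lborel_prod using bm A by measurable
  have "emeasure (Qm s) (A \<times> UNIV) = (\<integral>\<^sup>+ p. ennreal (binormal_density s p) * indicator (A \<times> UNIV) p \<partial>lborel)"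
    unfolding Qm_def using bm A by (subst emeasure_density) auto
  also have "\<dots> = (\<integral>\<^sup>+ p. ennreal (binormal_density s p) * indicator (A \<times> UNIV) p \<partial>(lborel \<Otimes>\<^sub>M lborel))"
    by (simp add: lborel_prod)
  also have "\<dots> = (\<integral>\<^sup>+ x. \<integral>\<^sup>+ y. ennreal (binormal_density s (x, y)) * indicator (A \<times> UNIV) (x, y) \<partial>lborel \<partial>lborel)"
    using lborel.nn_integral_fst[OF m] by simp
  also have "\<dots> = (\<integral>\<^sup>+ x. ennreal (std_normal_density x) * indicator A x * (\<integral>\<^sup>+ y. ennreal (normal_density (s * x) (sqrt (1 - s\<^sup>2)) y) \<partial>lborel) \<partial>lborel)"
  proof (intro nn_integral_cong)
    fix x :: real
    have "(\<integral>\<^sup>+ y. ennreal (binormal_density s (x, y)) * indicator (A \<times> UNIV) (x, y) \<partial>lborel)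
      = (\<integral>\<^sup>+ y. (ennreal (std_normal_density x) * indicator A x) * ennreal (normal_density (s * x) (sqrt (1 - s\<^sup>2)) y) \<partial>lborel)"
      by (intro nn_integral_cong) (simp add: binormal_factor[OF s] ennreal_mult' indicator_def mult_ac)
    also have "\<dots> = ennreal (std_normal_density x) * indicator A x * (\<integral>\<^sup>+ y. ennreal (normal_density (s * x) (sqrt (1 - s\<^sup>2)) y) \<partial>lborel)"
      by (rule nn_integral_cmult) simp
    finally show "(\<integral>\<^sup>+ y. ennreal (binormal_density s (x, y)) * indicator (A \<times> UNIV) (x, y) \<partial>lborel) = ennreal (std_normal_density x) * indicator A x * (\<integral>\<^sup>+ y. ennreal (normal_density (s * x) (sqrt (1 - s\<^sup>2)) y) \<partial>lborel)" .
  qed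
  also have "\<dots> = (\<integral>\<^sup>+ x. ennreal (std_normal_density x) * indicator A x \<partial>lborel)"
    by (simp add: nn_normal[OF sg])
  also have "\<dots> = emeasure (density lborel std_normal_density) A"
    using A by (subst emeasure_density) auto
  finally show ?thesis .
qed

lemma marg2:
  assumes s: "\<bar>s\<bar> < 1" and A: "A \<in> sets borel"
  shows "emeasure (Qm s) (UNIV \<times> A) = emeasure (density lborel std_normal_density) A"
proof -
  have sg: "0 < sqrt (1 - s\<^sup>2)" using s by (simp add: abs_square_less_1)
  note bm = binormal_meas[OF s]
  have m: "(\<lambda>p. ennreal (binormal_density s p) * indicator (UNIV \<times> A) p) \<in> borel_measurable (lborel \<Otimes>\<^sub>M lborel)"
    unfolding lborel_prod using bm A by measurable
  have ps: "pair_sigma_finite (lborel::real measure) (lborel::real measure)" by (simp add: pair_sigma_finite_def lborel.sigma_finite_measure_axioms)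
  have "emeasure (Qm s) (UNIV \<times> A) = (\<integral>\<^sup>+ p. ennreal (binormal_density s p) * indicator (UNIV \<times> A) p \<partial>lborel)"
    unfolding Qm_def using bm A by (subst emeasure_density) auto
  also have "\<dots> = (\<integral>\<^sup>+ p. ennreal (binormal_density s p) * indicator (UNIV \<times> A) p \<partial>(lborel \<Otimes>\<^sub>M lborel))"
    by (simp add: lborel_prod)
  also have "\<dots> = (\<integral>\<^sup>+ y. \<integral>\<^sup>+ x. ennreal (binormal_density s (x, y)) * indicator (UNIV \<times> A) (x, y) \<partial>lborel \<partial>lborel)"
    using pair_sigma_finite.nn_integral_snd[OF ps m] by simp
  also have "\<dots> = (\<integral>\<^sup>+ y. ennreal (std_normal_density y) * indicator A y * (\<integral>\<^sup>+ x. ennreal (normal_density (s * y) (sqrt (1 - s\<^sup>2)) x) \<partial>lborel) \<partial>lborel)"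
  proof (intro nn_integral_cong)
    fix y :: real
    have "(\<integral>\<^sup>+ x. ennreal (binormal_density s (x, y)) * indicator (UNIV \<times> A) (x, y) \<partial>lborel)
      = (\<integral>\<^sup>+ x. (ennreal (std_normal_density y) * indicator A y) * ennreal (normal_density (s * y) (sqrt (1 - s\<^sup>2)) x) \<partial>lborel)"
      by (intro nn_integral_cong) (subst binormal_swap, simp add: binormal_factor[OF s] ennreal_mult' indicator_def mult_ac)
    also have "\<dots> = ennreal (std_normal_density y) * indicator A y * (\<integral>\<^sup>+ x. ennreal (normal_density (s * y) (sqrt (1 - s\<^sup>2)) x) \<partial>lborel)"
      by (rule nn_integral_cmult) simp
    finally show "(\<integral>\<^sup>+ x. ennreal (binormal_density s (x, y)) * indicator (UNIV \<times> A) (x, y) \<partial>lborel) = ennreal (std_normal_density y) * indicator A y * (\<integral>\<^sup>+ x. ennreal (normal_density (s * y) (sqrt (1 - s\<^sup>2)) x) \<partial>lborel)" .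
  qed
  also have "\<dots> = (\<integral>\<^sup>+ x. ennreal (std_normal_density x) * indicator A x \<partial>lborel)"
    by (simp add: nn_normal[OF sg])
  also have "\<dots> = emeasure (density lborel std_normal_density) A"
    using A by (subst emeasure_density) auto
  finally show ?thesis .
qed


lemma space_Qm[simp]: "space (Qm s) = UNIV"
  by (simp add: Qm_def)

lemma std_UNIV: "emeasure (density lborel std_normal_density) UNIV = 1"
proof -
  interpret prob_space "density lborel std_normal_density" by (rule prob_space_normal_density) simp
  show ?thesis using emeasure_space_1 by simp
qed

lemma Qm_prob: assumes "\<bar>s\<bar> < 1" shows "prob_space (Qm s)"
proof
  show "emeasure (Qm s) (space (Qm s)) = 1"
    using marg1[OF assms, of UNIV] std_UNIV by simp
qed

lemma Phi_Qm1: "\<bar>s\<bar> < 1 \<Longrightarrow> Phi a = measure (Qm s) ({..a} \<times> UNIV)"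
  unfolding Phi_def measure_def by (subst marg1) auto

lemma Phi_Qm2: "\<bar>s\<bar> < 1 \<Longrightarrow> Phi a = measure (Qm s) (UNIV \<times> {..a})"
  unfolding Phi_def measure_def by (subst marg2) auto

lemma std_point: "emeasure (density lborel std_normal_density) {a} = 0"
proof -
  have "emeasure (density lborel std_normal_density) {a} = (\<integral>\<^sup>+ x. ennreal (std_normal_density x) * indicator {a} x \<partial>lborel)"
    by (subst emeasure_density) auto
  also have "\<dots> = 0"
  proof (subst nn_integral_0_iff_AE)
    show "(\<lambda>x. ennreal (std_normal_density x) * indicator {a} x) \<in> borel_measurable lborel" by simp
    show "AE x in lborel. ennreal (std_normal_density x) * indicator {a} x = 0"
      by (rule eventually_mono[OF AE_lborel_singleton[of a]]) simp
  qed
  finally show ?thesis .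
qed

lemma Qm_line1: "\<bar>s\<bar> < 1 \<Longrightarrow> emeasure (Qm s) ({a} \<times> UNIV) = 0"
  by (subst marg1) (auto simp: std_point)

lemma Qm_line2: "\<bar>s\<bar> < 1 \<Longrightarrow> emeasure (Qm s) (UNIV \<times> {a}) = 0"
  by (subst marg2) (auto simp: std_point)

lemma lborel_uminus_pair: "distr lborel borel uminus = (lborel :: (real \<times> real) measure)"
proof -
  note L = lborel_affine[of "-1::real" "0::real\<times>real", simplified]
  show ?thesis by (subst (2) L) (simp only: density_1)
qed

lemma Qm_reflect:
  assumes s: "\<bar>s\<bar> < 1" and S: "S \<in> sets borel"
  shows "emeasure (Qm s) (uminus -` S) = emeasure (Qm s) S"
proof -
  note bm = binormal_meas[OF s]
  have um: "(uminus :: real\<times>real \<Rightarrow> _) \<in> borel_measurable borel"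
    by (intro borel_measurable_continuous_onI continuous_intros)
  have S': "uminus -` S \<in> sets borel" using measurable_sets[OF um S] by simp
  have "emeasure (Qm s) (uminus -` S) = (\<integral>\<^sup>+ p. ennreal (binormal_density s p) * indicator (uminus -` S) p \<partial>lborel)"
    unfolding Qm_def using bm S' by (subst emeasure_density) auto
  also have "\<dots> = (\<integral>\<^sup>+ p. ennreal (binormal_density s (- p)) * indicator S (- p) \<partial>lborel)"
    by (intro nn_integral_cong) (auto simp: binormal_density_def indicator_def)
  also have "\<dots> = (\<integral>\<^sup>+ p. ennreal (binormal_density s p) * indicator S p \<partial>(distr lborel borel uminus))"
    using bm S by (subst nn_integral_distr) auto
  also have "\<dots> = emeasure (Qm s) S"
    unfolding lborel_uminus_pair Qm_def using bm S by (subst emeasure_density) auto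
  finally show ?thesis .
qed

lemma Qm_pos:
  assumes s: "\<bar>s\<bar> < 1" and S: "S \<in> sets borel" and nz: "emeasure lborel S \<noteq> 0"
  shows "0 < measure (Qm s) S"
proof -
  note bm = binormal_meas[OF s]
  interpret prob_space "Qm s" by (rule Qm_prob[OF s])
  have "emeasure (Qm s) S \<noteq> 0"
  proof
    assume "emeasure (Qm s) S = 0"
    then have "(\<integral>\<^sup>+ p. ennreal (binormal_density s p) * indicator S p \<partial>lborel) = 0"
      unfolding Qm_def using bm S by (subst (asm) emeasure_density) auto
    then have AE0: "AE p in lborel. ennreal (binormal_density s p) * indicator S p = 0"
      using bm S by (subst (asm) nn_integral_0_iff_AE) auto
    moreover have X: "p \<notin> S" if "ennreal (binormal_density s p) * indicator S p = 0" for p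
    proof
      assume "p \<in> S"
      with that have "ennreal (binormal_density s p) = 0" by simp
      then have "binormal_density s p \<le> 0" by (simp add: ennreal_eq_0_iff)
      with binormal_pos[OF s, of p] show False by simp
    qed
    have "AE p in lborel. p \<notin> S"
      by (rule eventually_mono[OF AE0 X])
    then have "S \<in> null_sets lborel"
      using S by (subst AE_iff_null_sets) auto
    with nz show False by auto
  qed
  then show ?thesis
    by (simp add: emeasure_eq_measure zero_less_measure_iff)
qed


lemma lborel_times_ne0:
  fixes A B :: "real set"
  assumes "A \<in> sets borel" "B \<in> sets borel" "emeasure lborel A \<noteq> 0" "emeasure lborel B \<noteq> 0"
  shows "emeasure lborel (A \<times> B) \<noteq> 0"
proof -
  have "emeasure (lborel \<Otimes>\<^sub>M lborel) (A \<times> B) = emeasure lborel A * emeasure lborel B"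
    using assms by (intro lborel.emeasure_pair_measure_Times) auto
  then show ?thesis using assms by (simp add: lborel_prod)
qed

lemma Iic_ne0: "emeasure lborel {..a::real} \<noteq> 0"
proof -
  have "emeasure lborel {a-1..a} \<le> emeasure lborel {..a}" by (intro emeasure_mono) auto
  then show ?thesis by auto
qed

lemma Ioi_ne0: "emeasure lborel {a::real<..} \<noteq> 0"
proof -
  have "emeasure lborel {a+1..a+2} \<le> emeasure lborel {a<..}" by (intro emeasure_mono) auto
  then show ?thesis by auto
qed

lemma alpha_Q:
  assumes s: "\<bar>s\<bar> < 1"
  shows "alpha1 a c s = measure (Qm s) ({..a} \<times> {..c})"
    and "alpha2 a c s = measure (Qm s) ({..a} \<times> {c<..})"
    and "alpha3 a c s = measure (Qm s) ({a<..} \<times> {..c})"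
    and "alpha4 a c s = measure (Qm s) ({a<..} \<times> {c<..})"
proof -
  interpret Q: prob_space "Qm s" by (rule Qm_prob[OF s])
  have U: "measure (Qm s) (A \<union> B) = measure (Qm s) A + measure (Qm s) B"
    if "A \<in> sets borel" "B \<in> sets borel" "A \<inter> B = {}" for A B
    using that by (intro Q.finite_measure_Union) auto
  have a1: "alpha1 a c s = measure (Qm s) ({..a} \<times> {..c})"
    by (simp add: alpha1_def Phi2_def Qm_def)
  then show "alpha1 a c s = measure (Qm s) ({..a} \<times> {..c})" .
  have "{..a} \<times> UNIV = {..a} \<times> {..c} \<union> {..a} \<times> {c<..}" by auto
  then have pa: "Phi a = measure (Qm s) ({..a} \<times> {..c}) + measure (Qm s) ({..a} \<times> {c<..})"
  proof -
    have "Phi a = measure (Qm s) ({..a} \<times> {..c} \<union> {..a} \<times> {c<..})"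
      using Phi_Qm1[OF s, of a] \<open>{..a} \<times> UNIV = _\<close> by simp
    also have "\<dots> = measure (Qm s) ({..a} \<times> {..c}) + measure (Qm s) ({..a} \<times> {c<..})"
      by (rule U) auto
    finally show ?thesis .
  qed
  then show a2: "alpha2 a c s = measure (Qm s) ({..a} \<times> {c<..})"
    by (simp add: alpha2_def a1[unfolded alpha1_def])
  have "UNIV \<times> {..c} = {..a} \<times> {..c} \<union> {a<..} \<times> {..c}" by auto
  then have pc: "Phi c = measure (Qm s) ({..a} \<times> {..c}) + measure (Qm s) ({a<..} \<times> {..c})"
  proof -
    have "Phi c = measure (Qm s) ({..a} \<times> {..c} \<union> {a<..} \<times> {..c})"
      using Phi_Qm2[OF s, of c] \<open>UNIV \<times> {..c} = _\<close> by simp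
    also have "\<dots> = measure (Qm s) ({..a} \<times> {..c}) + measure (Qm s) ({a<..} \<times> {..c})"
      by (rule U) auto
    finally show ?thesis .
  qed
  then show a3: "alpha3 a c s = measure (Qm s) ({a<..} \<times> {..c})"
    by (simp add: alpha3_def a1[unfolded alpha1_def])
  have "UNIV = ({..a} \<times> UNIV) \<union> ({a<..} \<times> {..c} \<union> {a<..} \<times> {c<..})" by auto
  then have "1 = measure (Qm s) ({..a} \<times> UNIV) + (measure (Qm s) ({a<..} \<times> {..c}) + measure (Qm s) ({a<..} \<times> {c<..}))"
  proof -
    have "1 = measure (Qm s) (({..a} \<times> UNIV) \<union> ({a<..} \<times> {..c} \<union> {a<..} \<times> {c<..}))"
      using Q.prob_space \<open>UNIV = _\<close>[symmetric] by simp
    also have "\<dots> = measure (Qm s) ({..a} \<times> UNIV) + measure (Qm s) ({a<..} \<times> {..c} \<union> {a<..} \<times> {c<..})"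
      by (rule U) auto
    also have "measure (Qm s) ({a<..} \<times> {..c} \<union> {a<..} \<times> {c<..}) = measure (Qm s) ({a<..} \<times> {..c}) + measure (Qm s) ({a<..} \<times> {c<..})"
      by (rule U) auto
    finally show ?thesis .
  qed
  then show "alpha4 a c s = measure (Qm s) ({a<..} \<times> {c<..})"
    using Phi_Qm1[OF s, of a] pc by (simp add: alpha4_def a1[unfolded alpha1_def])
qed


lemma alpha_pos:
  assumes s: "\<bar>s\<bar> < 1"
  shows "0 < alpha1 a c s" "0 < alpha2 a c s" "0 < alpha3 a c s" "0 < alpha4 a c s"
  unfolding alpha_Q[OF s]
  by (intro Qm_pos[OF s] times_borel lborel_times_ne0 Iic_ne0 Ioi_ne0; simp)+

lemma uminus_borel: "S \<in> sets borel \<Longrightarrow> uminus -` S \<in> sets (borel :: (real \<times> real) measure)"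
proof -
  assume S: "S \<in> sets borel"
  have um: "(uminus :: real\<times>real \<Rightarrow> _) \<in> borel_measurable borel"
    by (intro borel_measurable_continuous_onI continuous_intros)
  show ?thesis using measurable_sets[OF um S] by simp
qed

lemma Qm_reflect_measure:
  "\<bar>s\<bar> < 1 \<Longrightarrow> S \<in> sets borel \<Longrightarrow> measure (Qm s) S = measure (Qm s) (uminus -` S)"
  unfolding measure_def using Qm_reflect by simp

lemma Qm_modnull:
  assumes s: "\<bar>s\<bar> < 1" and S: "S \<in> sets borel" and S': "S' \<in> sets borel"
    and eq: "\<And>x y. x \<noteq> a \<Longrightarrow> y \<noteq> c \<Longrightarrow> ((x, y) \<in> S \<longleftrightarrow> (x, y) \<in> S')"
  shows "measure (Qm s) S = measure (Qm s) S'"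
proof -
  let ?L = "{a} \<times> UNIV \<union> UNIV \<times> {c}"
  have Lb: "?L \<in> sets borel" by (intro sets.Un times_borel) auto
  have "emeasure (Qm s) ?L \<le> emeasure (Qm s) ({a} \<times> UNIV) + emeasure (Qm s) (UNIV \<times> {c})"
    by (intro emeasure_subadditive) auto
  then have "emeasure (Qm s) ?L = 0" using Qm_line1[OF s] Qm_line2[OF s] by simp
  then have "?L \<in> null_sets (Qm s)" using Lb by (simp add: null_sets_def)
  then have "AE p in Qm s. p \<notin> ?L" by (rule AE_not_in)
  then have "AE p in Qm s. p \<in> S \<longleftrightarrow> p \<in> S'"
    by (rule eventually_mono) (use eq in auto)
  then have "emeasure (Qm s) S = emeasure (Qm s) S'"
    using S S' by (intro emeasure_eq_AE) auto
  then show ?thesis by (simp add: measure_def)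
qed

lemma true_gen:
  assumes d: "distributed P lborel (\<lambda>w. (X w, Y w)) (\<lambda>p. ennreal (binormal_density s p))"
    and S: "S \<in> sets borel"
  shows "measure P {w \<in> space P. (X w, Y w) \<in> S} = measure (Qm s) S"
proof -
  have eq: "distr P lborel (\<lambda>w. (X w, Y w)) = Qm s" and m: "(\<lambda>w. (X w, Y w)) \<in> measurable P lborel"
    using d by (auto simp: distributed_def Qm_def)
  have "measure (Qm s) S = measure P ((\<lambda>w. (X w, Y w)) -` S \<inter> space P)"
    unfolding eq[symmetric] using m S by (subst measure_distr) auto
  also have "(\<lambda>w. (X w, Y w)) -` S \<inter> space P = {w \<in> space P. (X w, Y w) \<in> S}" by auto
  finally show ?thesis ..
qed

lemma true_probs:
  assumes s: "\<bar>s\<bar> < 1"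
    and d: "distributed P lborel (\<lambda>w. (X w, Y w)) (\<lambda>p. ennreal (binormal_density s p))"
  shows "measure P {w \<in> space P. 0 < a + X w \<and> 0 < c + Y w} = alpha1 a c s"
    and "measure P {w \<in> space P. 0 < a + X w \<and> \<not> 0 < c + Y w} = alpha2 a c s"
    and "measure P {w \<in> space P. \<not> 0 < a + X w \<and> 0 < c + Y w} = alpha3 a c s"
    and "measure P {w \<in> space P. \<not> 0 < a + X w \<and> \<not> 0 < c + Y w} = alpha4 a c s"
proof -
  have G: "measure P {w \<in> space P. (X w, Y w) \<in> A \<times> B} = measure (Qm s) (uminus -` (A \<times> B))"
    if "A \<in> sets borel" "B \<in> sets borel" for A B
    using that true_gen[OF d, of "A \<times> B"] Qm_reflect_measure[OF s, of "A \<times> B"] by simp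
  have "measure P {w \<in> space P. 0 < a + X w \<and> 0 < c + Y w} = measure P {w \<in> space P. (X w, Y w) \<in> {-a<..} \<times> {-c<..}}"
    by (intro arg_cong[where f="measure P"]) auto
  also have "\<dots> = measure (Qm s) (uminus -` ({-a<..} \<times> {-c<..}))" by (rule G) auto
  also have "\<dots> = measure (Qm s) ({..a} \<times> {..c})"
    by (rule Qm_modnull[OF s, where a=a and c=c]) (auto intro!: uminus_borel)
  finally show "measure P {w \<in> space P. 0 < a + X w \<and> 0 < c + Y w} = alpha1 a c s"
    using alpha_Q[OF s] by simp
  have "measure P {w \<in> space P. 0 < a + X w \<and> \<not> 0 < c + Y w} = measure P {w \<in> space P. (X w, Y w) \<in> {-a<..} \<times> {..-c}}"
    by (intro arg_cong[where f="measure P"]) auto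
  also have "\<dots> = measure (Qm s) (uminus -` ({-a<..} \<times> {..-c}))" by (rule G) auto
  also have "\<dots> = measure (Qm s) ({..a} \<times> {c<..})"
    by (rule Qm_modnull[OF s, where a=a and c=c]) (auto intro!: uminus_borel)
  finally show "measure P {w \<in> space P. 0 < a + X w \<and> \<not> 0 < c + Y w} = alpha2 a c s"
    using alpha_Q[OF s] by simp
  have "measure P {w \<in> space P. \<not> 0 < a + X w \<and> 0 < c + Y w} = measure P {w \<in> space P. (X w, Y w) \<in> {..-a} \<times> {-c<..}}"
    by (intro arg_cong[where f="measure P"]) auto
  also have "\<dots> = measure (Qm s) (uminus -` ({..-a} \<times> {-c<..}))" by (rule G) auto
  also have "\<dots> = measure (Qm s) ({a<..} \<times> {..c})"
    by (rule Qm_modnull[OF s, where a=a and c=c]) (auto intro!: uminus_borel)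
  finally show "measure P {w \<in> space P. \<not> 0 < a + X w \<and> 0 < c + Y w} = alpha3 a c s"
    using alpha_Q[OF s] by simp
  have "measure P {w \<in> space P. \<not> 0 < a + X w \<and> \<not> 0 < c + Y w} = measure P {w \<in> space P. (X w, Y w) \<in> {..-a} \<times> {..-c}}"
    by (intro arg_cong[where f="measure P"]) auto
  also have "\<dots> = measure (Qm s) (uminus -` ({..-a} \<times> {..-c}))" by (rule G) auto
  also have "\<dots> = measure (Qm s) ({a<..} \<times> {c<..})"
    by (rule Qm_modnull[OF s, where a=a and c=c]) (auto intro!: uminus_borel)
  finally show "measure P {w \<in> space P. \<not> 0 < a + X w \<and> \<not> 0 < c + Y w} = alpha4 a c s"
    using alpha_Q[OF s] by simp
qed


lemma pair_integral:
  assumes P: "prob_space P" and s: "\<bar>s\<bar> < 1"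
    and d: "distributed P lborel (\<lambda>w. (X w, Y w)) (\<lambda>p. ennreal (binormal_density s p))"
    and u: "\<And>w. u w = (if 0 < a + X w then 1 else 0)"
    and v: "\<And>w. v w = (if 0 < c + Y w then 1 else 0)"
  shows "has_bochner_integral P
     (\<lambda>w. u w * v w * ka + u w * (1 - v w) * kb + (1 - u w) * v w * kc + (1 - u w) * (1 - v w) * kd)
     (alpha1 a c s * ka + alpha2 a c s * kb + alpha3 a c s * kc + alpha4 a c s * kd)"
proof -
  interpret prob_space P by (rule P)
  have m: "(\<lambda>w. (X w, Y w)) \<in> measurable P lborel" using d by (simp add: distributed_def)
  have m2: "(\<lambda>w. (X w, Y w)) \<in> measurable P (borel \<Otimes>\<^sub>M borel)"
    using m by (simp add: borel_prod)
  have mX[measurable]: "X \<in> borel_measurable P"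
    using measurable_Pair1_compose[OF m2 measurable_ident] by simp
  have mY[measurable]: "Y \<in> borel_measurable P"
    using measurable_Pair2_compose[OF m2 measurable_ident] by simp
  define E1 where "E1 = {w \<in> space P. 0 < a + X w \<and> 0 < c + Y w}"
  define E2 where "E2 = {w \<in> space P. 0 < a + X w \<and> \<not> 0 < c + Y w}"
  define E3 where "E3 = {w \<in> space P. \<not> 0 < a + X w \<and> 0 < c + Y w}"
  define E4 where "E4 = {w \<in> space P. \<not> 0 < a + X w \<and> \<not> 0 < c + Y w}"
  have sets: "E1 \<in> sets P" "E2 \<in> sets P" "E3 \<in> sets P" "E4 \<in> sets P"
    unfolding E1_def E2_def E3_def E4_def by measurable
  have I: "has_bochner_integral P (\<lambda>w. indicator E w * cc) (measure P E * cc)" if "E \<in> sets P" for E cc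
    by (intro has_bochner_integral_mult_left has_bochner_integral_real_indicator that) (simp add: emeasure_eq_measure)
  have H: "has_bochner_integral P
     (\<lambda>w. indicator E1 w * ka + indicator E2 w * kb + indicator E3 w * kc + indicator E4 w * kd)
     (measure P E1 * ka + measure P E2 * kb + measure P E3 * kc + measure P E4 * kd)"
    by (intro has_bochner_integral_add I sets)
  have tp: "measure P E1 = alpha1 a c s" "measure P E2 = alpha2 a c s" "measure P E3 = alpha3 a c s" "measure P E4 = alpha4 a c s"
    unfolding E1_def E2_def E3_def E4_def using true_probs[OF s d] by auto
  show ?thesis
    using H unfolding tp
    by (rule has_bochner_integral_cong[THEN iffD1, rotated -1]) (auto simp: u v E1_def E2_def E3_def E4_def indicator_def)
qed


lemma gibbs_term:
  fixes p q :: real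
  assumes "0 < p" "0 < q"
  shows "p * ln q - p * ln p \<le> q - p"
proof -
  have "ln (q / p) \<le> q / p - 1" using assms by (intro ln_le_minus_one) simp
  then have "ln q - ln p \<le> q / p - 1" using assms by (simp add: ln_div)
  then have "p * (ln q - ln p) \<le> p * (q / p - 1)" using assms by (intro mult_left_mono) auto
  moreover have "p * (q / p - 1) = q - p" using assms by (simp add: field_simps)
  ultimately show ?thesis by (simp add: right_diff_distrib)
qed

lemma gibbs:
  fixes p1 p2 p3 p4 q1 q2 q3 q4 :: real
  assumes "0 < p1" "0 < p2" "0 < p3" "0 < p4" "0 < q1" "0 < q2" "0 < q3" "0 < q4"
    and "p1 + p2 + p3 + p4 = 1" "q1 + q2 + q3 + q4 = 1"
  shows "p1 * ln q1 + p2 * ln q2 + p3 * ln q3 + p4 * ln q4 \<le> p1 * ln p1 + p2 * ln p2 + p3 * ln p3 + p4 * ln p4"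
  using gibbs_term[of p1 q1] gibbs_term[of p2 q2] gibbs_term[of p3 q3] gibbs_term[of p4 q4] assms
  by linarith

lemma alpha_sum: "alpha1 a c s + alpha2 a c s + alpha3 a c s + alpha4 a c s = 1"
  by (simp add: alpha1_def alpha2_def alpha3_def alpha4_def)

lemma row_unique:
  assumes bin: "\<forall>k<K. Z i k = 0 \<or> Z i k = 1" and sum1: "(\<Sum>k<K. Z i k) = (1::real)"
  shows "comm K Z i < K \<and> Z i (comm K Z i) = 1 \<and> (\<forall>k<K. k \<noteq> comm K Z i \<longrightarrow> Z i k = 0)"
proof -
  let ?S = "{k \<in> {..<K}. Z i k = 1}"
  have "(\<Sum>k<K. Z i k) = (\<Sum>k<K. if Z i k = 1 then 1 else 0)"
    using bin by (intro sum.cong) auto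
  also have "\<dots> = (\<Sum>k\<in>?S. 1)" by (rule sum.inter_filter[symmetric]) simp
  finally have "card ?S = 1" using sum1 by simp
  then obtain k0 where S: "?S = {k0}" by (auto simp: card_1_singleton_iff)
  then have k0: "k0 < K" "Z i k0 = 1" by auto
  have c: "comm K Z i = k0"
    unfolding comm_def
  proof (rule the_equality)
    show "k0 < K \<and> Z i k0 = 1" using k0 by simp
    show "k = k0" if "k < K \<and> Z i k = 1" for k using that S by auto
  qed
  have "\<forall>k<K. k \<noteq> k0 \<longrightarrow> Z i k = 0" using S bin by auto
  then show ?thesis using c k0 by simp
qed

lemma row_collapse:
  assumes "\<forall>k<K. Z i k = 0 \<or> Z i k = 1" "(\<Sum>k<K. Z i k) = (1::real)"
  shows "(\<Sum>k<K. Z i k * g k) = g (comm K Z i)"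
proof -
  note r = row_unique[of K Z i, OF assms]
  have "(\<Sum>k<K. Z i k * g k) = Z i (comm K Z i) * g (comm K Z i) + (\<Sum>k\<in>{..<K} - {comm K Z i}. Z i k * g k)"
    using r by (subst sum.remove[of _ "comm K Z i"]) auto
  also have "(\<Sum>k\<in>{..<K} - {comm K Z i}. Z i k * g k) = 0"
    using r by (intro sum.neutral) auto
  finally show ?thesis using r by simp
qed

lemma swap3: "(\<Sum>k\<in>A. \<Sum>l\<in>B. \<Sum>i\<in>C. Q k l i) = (\<Sum>i\<in>C. \<Sum>k\<in>A. \<Sum>l\<in>B. (Q k l i :: real))"
proof -
  have "(\<Sum>k\<in>A. \<Sum>l\<in>B. \<Sum>i\<in>C. Q k l i) = (\<Sum>k\<in>A. \<Sum>i\<in>C. \<Sum>l\<in>B. Q k l i)"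
    by (intro sum.cong refl sum.swap)
  also have "\<dots> = (\<Sum>i\<in>C. \<Sum>k\<in>A. \<Sum>l\<in>B. Q k l i)" by (rule sum.swap)
  finally show ?thesis .
qed


theorem lemma1:
  fixes P :: "'w measure"
    and N M K :: nat
    and cl cu rho D :: real
    and T :: "nat \<Rightarrow> nat \<Rightarrow> (nat \<times> nat) set"
    and inv_supp :: "nat \<Rightarrow> nat \<Rightarrow> bool"
    and eps :: "nat \<Rightarrow> nat \<Rightarrow> nat \<Rightarrow> 'w \<Rightarrow> real"
    and mu0 mu :: "nat \<Rightarrow> nat \<Rightarrow> nat \<Rightarrow> real"
    and Sig0 Sig :: "nat \<Rightarrow> nat \<Rightarrow> nat \<Rightarrow> nat \<Rightarrow> real"
    and Z0 Z :: "nat \<Rightarrow> nat \<Rightarrow> real"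
  assumes "prob_space P"
    and "cl < 1" and "1 < cu" and "0 < rho" and "rho < 1" and "D < 1"
    and true_param: "Omega N M K cl cu rho D T inv_supp mu0 Sig0 Z0"
    and noise: "\<And>i j b d. i < j \<Longrightarrow> j < N \<Longrightarrow> b < d \<Longrightarrow> d < M \<Longrightarrow>
      distributed P lborel (\<lambda>w. (eps i j b w, eps i j d w))
        (\<lambda>p. ennreal (binormal_density (Sig0 b d (comm K Z0 i) (comm K Z0 j)) p))"
    and "Omega N M K cl cu rho D T inv_supp mu Sig Z"
  shows "excess P N M K eps mu0 Sig0 Z0 mu Sig Z \<ge> 0"
proof -
  note Pp = assms(1)
  note O0 = true_param[unfolded Omega_def]
  note O1 = assms(9)[unfolded Omega_def]
  define c0 where "c0 = comm K Z0"
  define c1 where "c1 = comm K Z"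
  have row0: "c0 i < K" "(\<Sum>k<K. Z0 i k * g k) = g (c0 i)" if "i < N" for i and g :: "nat \<Rightarrow> real"
    using row_unique[of K Z0 i] row_collapse[of K Z0 i g] O0 that unfolding c0_def by auto
  have row1: "c1 i < K" "(\<Sum>k<K. Z i k * g k) = g (c1 i)" if "i < N" for i and g :: "nat \<Rightarrow> real"
    using row_unique[of K Z i] row_collapse[of K Z i g] O1 that unfolding c1_def by auto
  have s0: "\<bar>Sig0 b d (c0 i) (c0 j)\<bar> < 1" if "i < N" "j < N" "b < d" "d < M" for i j b d
  proof -
    have "\<bar>Sig0 b d (c0 i) (c0 j)\<bar> \<le> D" using O0 row0(1)[OF that(1)] row0(1)[OF that(2)] that by auto
    then show ?thesis using assms(6) by simp
  qed
  have s1: "\<bar>Sig b d (c1 i) (c1 j)\<bar> < 1" if "i < N" "j < N" "b < d" "d < M" for i j b d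
  proof -
    have "\<bar>Sig b d (c1 i) (c1 j)\<bar> \<le> D" using O1 row1(1)[OF that(1)] row1(1)[OF that(2)] that by auto
    then show ?thesis using assms(6) by simp
  qed
  define p1 where "p1 i j b d = alpha1 (mu0 b (c0 i) (c0 j)) (mu0 d (c0 i) (c0 j)) (Sig0 b d (c0 i) (c0 j))" for i j b d
  define p2 where "p2 i j b d = alpha2 (mu0 b (c0 i) (c0 j)) (mu0 d (c0 i) (c0 j)) (Sig0 b d (c0 i) (c0 j))" for i j b d
  define p3 where "p3 i j b d = alpha3 (mu0 b (c0 i) (c0 j)) (mu0 d (c0 i) (c0 j)) (Sig0 b d (c0 i) (c0 j))" for i j b d
  define p4 where "p4 i j b d = alpha4 (mu0 b (c0 i) (c0 j)) (mu0 d (c0 i) (c0 j)) (Sig0 b d (c0 i) (c0 j))" for i j b d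
  define G where "G mu' Sig' k l i j b d =
     p1 i j b d * ln (alpha1 (mu' b k l) (mu' d k l) (Sig' b d k l))
   + p2 i j b d * ln (alpha2 (mu' b k l) (mu' d k l) (Sig' b d k l))
   + p3 i j b d * ln (alpha3 (mu' b k l) (mu' d k l) (Sig' b d k l))
   + p4 i j b d * ln (alpha4 (mu' b k l) (mu' d k l) (Sig' b d k l))"
    for mu' :: "nat \<Rightarrow> nat \<Rightarrow> nat \<Rightarrow> real" and Sig' :: "nat \<Rightarrow> nat \<Rightarrow> nat \<Rightarrow> nat \<Rightarrow> real" and k l i j b d
  define F where "F mu' Sig' k l i j b d w =
     Adj K mu0 Z0 eps w b i j * Adj K mu0 Z0 eps w d i j * ln (alpha1 (mu' b k l) (mu' d k l) (Sig' b d k l))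
   + Adj K mu0 Z0 eps w b i j * (1 - Adj K mu0 Z0 eps w d i j) * ln (alpha2 (mu' b k l) (mu' d k l) (Sig' b d k l))
   + (1 - Adj K mu0 Z0 eps w b i j) * Adj K mu0 Z0 eps w d i j * ln (alpha3 (mu' b k l) (mu' d k l) (Sig' b d k l))
   + (1 - Adj K mu0 Z0 eps w b i j) * (1 - Adj K mu0 Z0 eps w d i j) * ln (alpha4 (mu' b k l) (mu' d k l) (Sig' b d k l))"
    for mu' :: "nat \<Rightarrow> nat \<Rightarrow> nat \<Rightarrow> real" and Sig' :: "nat \<Rightarrow> nat \<Rightarrow> nat \<Rightarrow> nat \<Rightarrow> real" and k l i j b d w
  have Fint: "has_bochner_integral P (F mu' Sig' k l i j b d) (G mu' Sig' k l i j b d)"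
    if "i < j" "j < N" "b < d" "d < M" for mu' Sig' k l i j b d
  proof -
    have d: "distributed P lborel (\<lambda>w. (eps i j b w, eps i j d w))
        (\<lambda>p. ennreal (binormal_density (Sig0 b d (c0 i) (c0 j)) p))"
      using noise[OF that] unfolding c0_def .
    have ss: "\<bar>Sig0 b d (c0 i) (c0 j)\<bar> < 1" using s0[of i j b d] that by simp
    have u: "Adj K mu0 Z0 eps w b i j = (if 0 < mu0 b (c0 i) (c0 j) + eps i j b w then 1 else 0)" for w
      using that by (simp add: Adj_def c0_def)
    have v: "Adj K mu0 Z0 eps w d i j = (if 0 < mu0 d (c0 i) (c0 j) + eps i j d w then 1 else 0)" for w
      using that by (simp add: Adj_def c0_def)
    show ?thesis
      using pair_integral[OF Pp ss d u v,
          where ka="ln (alpha1 (mu' b k l) (mu' d k l) (Sig' b d k l))"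
            and kb="ln (alpha2 (mu' b k l) (mu' d k l) (Sig' b d k l))"
            and kc="ln (alpha3 (mu' b k l) (mu' d k l) (Sig' b d k l))"
            and kd="ln (alpha4 (mu' b k l) (mu' d k l) (Sig' b d k l))"]
      unfolding F_def[abs_def] G_def p1_def p2_def p3_def p4_def by (simp add: mult_ac)
  qed
  have Lkl_eq: "Lkl N M mu' Sig' Z' (Adj K mu0 Z0 eps w) k l =
      (\<Sum>i<N. \<Sum>j\<in>{i<..<N}. \<Sum>b<M. \<Sum>d\<in>{b<..<M}. Z' i k * Z' j l * F mu' Sig' k l i j b d w)"
    for mu' Sig' Z' k l w
    unfolding Lkl_def F_def ..
  define W where "W k l i j b d = Z0 i k * Z0 j l * G mu0 Sig0 k l i j b d - Z i k * Z j l * G mu Sig k l i j b d" for k l i j b d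
  define V where "V k l = (\<Sum>i<N. \<Sum>j\<in>{i<..<N}. \<Sum>b<M. \<Sum>d\<in>{b<..<M}. W k l i j b d)" for k l
  have FW: "has_bochner_integral P (\<lambda>w. Z0 i k * Z0 j l * F mu0 Sig0 k l i j b d w - Z i k * Z j l * F mu Sig k l i j b d w) (W k l i j b d)"
    if "i < j" "j < N" "b < d" "d < M" for k l i j b d
    unfolding W_def by (intro has_bochner_integral_diff has_bochner_integral_mult_right Fint that)
  have int_kl: "integral\<^sup>L P (\<lambda>w. Lkl N M mu0 Sig0 Z0 (Adj K mu0 Z0 eps w) k l - Lkl N M mu Sig Z (Adj K mu0 Z0 eps w) k l) = V k l"
    for k l
  proof -
    have "has_bochner_integral P (\<lambda>w. \<Sum>i<N. \<Sum>j\<in>{i<..<N}. \<Sum>b<M. \<Sum>d\<in>{b<..<M}.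
        Z0 i k * Z0 j l * F mu0 Sig0 k l i j b d w - Z i k * Z j l * F mu Sig k l i j b d w) (V k l)"
      unfolding V_def by (intro has_bochner_integral_sum FW) auto
    then have "has_bochner_integral P (\<lambda>w. Lkl N M mu0 Sig0 Z0 (Adj K mu0 Z0 eps w) k l - Lkl N M mu Sig Z (Adj K mu0 Z0 eps w) k l) (V k l)"
      by (rule has_bochner_integral_cong[THEN iffD1, rotated -1]) (simp_all add: Lkl_eq sum_subtractf)
    then show ?thesis by (rule has_bochner_integral_integral_eq)
  qed
  have collapse: "(\<Sum>k<K. \<Sum>l<K. W k l i j b d) = G mu0 Sig0 (c0 i) (c0 j) i j b d - G mu Sig (c1 i) (c1 j) i j b d"
    if "i < N" "j < N" for i j b d
  proof -
    have "(\<Sum>k<K. \<Sum>l<K. W k l i j b d) = (\<Sum>k<K. \<Sum>l<K. Z0 i k * (Z0 j l * G mu0 Sig0 k l i j b d))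
          - (\<Sum>k<K. \<Sum>l<K. Z i k * (Z j l * G mu Sig k l i j b d))"
      unfolding W_def by (simp add: sum_subtractf mult_ac)
    also have "\<dots> = (\<Sum>k<K. Z0 i k * (\<Sum>l<K. Z0 j l * G mu0 Sig0 k l i j b d))
          - (\<Sum>k<K. Z i k * (\<Sum>l<K. Z j l * G mu Sig k l i j b d))"
      by (simp add: sum_distrib_left)
    also have "\<dots> = G mu0 Sig0 (c0 i) (c0 j) i j b d - G mu Sig (c1 i) (c1 j) i j b d"
      using that by (simp add: row0(2) row1(2))
    finally show ?thesis .
  qed
  have pair_nonneg: "G mu Sig (c1 i) (c1 j) i j b d \<le> G mu0 Sig0 (c0 i) (c0 j) i j b d"
    if "i < j" "j < N" "b < d" "d < M" for i j b d
  proof -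
    have i: "i < N" using that by simp
    note ss0 = s0[OF i that(2-4)] and ss1 = s1[OF i that(2-4)]
    note pp = alpha_pos[OF ss0, of "mu0 b (c0 i) (c0 j)" "mu0 d (c0 i) (c0 j)"]
    note qq = alpha_pos[OF ss1, of "mu b (c1 i) (c1 j)" "mu d (c1 i) (c1 j)"]
    show "G mu Sig (c1 i) (c1 j) i j b d \<le> G mu0 Sig0 (c0 i) (c0 j) i j b d"
      unfolding G_def p1_def[symmetric] p2_def[symmetric] p3_def[symmetric] p4_def[symmetric]
      by (rule gibbs) (use pp qq alpha_sum in \<open>simp_all add: p1_def p2_def p3_def p4_def\<close>)
  qed
  have "(\<Sum>k<K. \<Sum>l<K. V k l) = (\<Sum>i<N. \<Sum>j\<in>{i<..<N}. \<Sum>b<M. \<Sum>d\<in>{b<..<M}. \<Sum>k<K. \<Sum>l<K. W k l i j b d)"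
    unfolding V_def
    apply (subst swap3[where A="{..<K}" and B="{..<K}"])
    apply (rule sum.cong[OF refl])
    apply (subst swap3[where A="{..<K}" and B="{..<K}"])
    apply (rule sum.cong[OF refl])
    apply (subst swap3[where A="{..<K}" and B="{..<K}"])
    apply (rule sum.cong[OF refl])
    apply (subst swap3[where A="{..<K}" and B="{..<K}"])
    apply (rule refl)
    done
  also have "\<dots> = (\<Sum>i<N. \<Sum>j\<in>{i<..<N}. \<Sum>b<M. \<Sum>d\<in>{b<..<M}.
      G mu0 Sig0 (c0 i) (c0 j) i j b d - G mu Sig (c1 i) (c1 j) i j b d)"
    by (intro sum.cong refl) (simp add: collapse)
  also have "\<dots> \<ge> 0"
    by (intro sum_nonneg) (auto simp: pair_nonneg)
  finally have "0 \<le> (\<Sum>k<K. \<Sum>l<K. V k l)" .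
  then show ?thesis
    unfolding excess_def int_kl by simp
qed

end
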